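(* Let $X=X(s)$ be a strictly convex $C^{(3)}$ plane curve, parametrized by arclength, such that for some function $\lambda(s)$ and for all $s$ and all sufficiently small $h_1,h_2$ (with $X(s),X(s+h_1),X(s+h_2)$ distinct) we have $U(s,h_1,h_2)=\lambda(s)T(s,h_1,h_2)$. Fix a point $A\in X$ and choose Cartesian coordinates with $A$ at the origin and the $x$-axis equal to the tangent line of $X$ at $A$, so that near $A$ the curve $X$ is the graph of a non-negative strictly convex $C^{(3)}$ function $f$ with $f(0)=f'(0)=0$ and $f''(0)>0$. Then for all $t$ in some open interval around $0$, $$2f(t)^2f''(t)=f'(t)^2\bigl(tf'(t)-f(t)\bigr).$$
   Context: A simple convex plane curve is strictly convex if it is of class $C^{(3)}$ and has positive curvature with respect to the unit normal pointing to the convex side. For three distinct points $A=X(s)$, $A_i=X(s+h_i)$ ($i=1,2$) on $X$, let $\ell,\ell_1,\ell_2$ be the tangent lines of $X$ at $A,A_1,A_2$, and let $B=\ell_1\cap\ell_2$, $B_1=\ell\cap\ell_1$, $B_2=\ell\cap\ell_2$. Define $T(s,h_1,h_2)=|\triangle AA_1A_2|$ and $U(s,h_1,h_2)=|\triangle BB_1B_2|$ (areas). *)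

theory Defs
  imports "HOL-Analysis.Analysis"
begin

definition det2 :: "real \<times> real \<Rightarrow> real \<times> real \<Rightarrow> real" where
  "det2 u v = fst u * snd v - snd u * fst v"

definition tri_area :: "real \<times> real \<Rightarrow> real \<times> real \<Rightarrow> real \<times> real \<Rightarrow> real" where
  "tri_area P Q R = \<bar>det2 (Q - P) (R - P)\<bar> / 2"

definition vel :: "(real \<Rightarrow> real \<times> real) \<Rightarrow> real \<Rightarrow> real \<times> real" where
  "vel X s = vector_derivative X (at s)"

definition acc :: "(real \<Rightarrow> real \<times> real) \<Rightarrow> real \<Rightarrow> real \<times> real" where
  "acc X s = vector_derivative (vel X) (at s)"

text \<open>Intersection point of the tangent lines of X at X a and at X b
  (line X a + t X'(a) meets line X b + r X'(b)).\<close>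
definition tangent_meet :: "(real \<Rightarrow> real \<times> real) \<Rightarrow> real \<Rightarrow> real \<Rightarrow> real \<times> real" where
  "tangent_meet X a b =
     X a + (det2 (X b - X a) (vel X b) / det2 (vel X a) (vel X b)) *\<^sub>R vel X a"

text \<open>T(s,h1,h2) = area of triangle A A1 A2; U(s,h1,h2) = area of triangle B B1 B2,
  with B = l1 \<inter> l2, B1 = l \<inter> l1, B2 = l \<inter> l2.\<close>
definition T_area :: "(real \<Rightarrow> real \<times> real) \<Rightarrow> real \<Rightarrow> real \<Rightarrow> real \<Rightarrow> real" where
  "T_area X s h1 h2 = tri_area (X s) (X (s + h1)) (X (s + h2))"

definition U_area :: "(real \<Rightarrow> real \<times> real) \<Rightarrow> real \<Rightarrow> real \<Rightarrow> real \<Rightarrow> real" where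
  "U_area X s h1 h2 =
     tri_area (tangent_meet X (s + h1) (s + h2)) (tangent_meet X s (s + h1))
              (tangent_meet X s (s + h2))"

definition C3_curve_on :: "(real \<Rightarrow> real \<times> real) \<Rightarrow> real set \<Rightarrow> bool" where
  "C3_curve_on X I \<longleftrightarrow> (\<exists>D1 D2 D3. (\<forall>s\<in>I.
      (X has_vector_derivative D1 s) (at s) \<and>
      (D1 has_vector_derivative D2 s) (at s) \<and>
      (D2 has_vector_derivative D3 s) (at s)) \<and> continuous_on I D3)"

definition C3_fun_on :: "(real \<Rightarrow> real) \<Rightarrow> real set \<Rightarrow> bool" where
  "C3_fun_on f S \<longleftrightarrow> (\<exists>D1 D2 D3. (\<forall>t\<in>S.
      (f has_real_derivative D1 t) (at t) \<and>
      (D1 has_real_derivative D2 t) (at t) \<and>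
      (D2 has_real_derivative D3 t) (at t)) \<and> continuous_on S D3)"

definition strictly_convex_fun_on :: "(real \<Rightarrow> real) \<Rightarrow> real set \<Rightarrow> bool" where
  "strictly_convex_fun_on f S \<longleftrightarrow> (\<forall>x\<in>S. \<forall>y\<in>S. \<forall>u. x \<noteq> y \<and> 0 < u \<and> u < 1 \<longrightarrow>
      f (u * x + (1 - u) * y) < u * f x + (1 - u) * f y)"

definition simple_convex_curve :: "(real \<Rightarrow> real \<times> real) \<Rightarrow> real set \<Rightarrow> bool" where
  "simple_convex_curve X I \<longleftrightarrow>
     open I \<and> is_interval I \<and> I \<noteq> {} \<and> continuous_on I X \<and>
     (inj_on X I \<or> (I = UNIV \<and> (\<exists>L>0. (\<forall>s. X (s + L) = X s) \<and> inj_on X {0..<L}))) \<and>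
     (\<exists>C. convex C \<and> X ` I \<subseteq> frontier C)"

text \<open>Strictly convex: C^3 and positive curvature w.r.t. the normal pointing to the
  convex side; for a convex curve this is equivalent to nonvanishing
  det(X', X'').\<close>
definition strictly_convex_curve :: "(real \<Rightarrow> real \<times> real) \<Rightarrow> real set \<Rightarrow> bool" where
  "strictly_convex_curve X I \<longleftrightarrow>
     simple_convex_curve X I \<and> C3_curve_on X I \<and>
     (\<forall>s\<in>I. det2 (vel X s) (acc X s) \<noteq> 0)"

definition arclength_param :: "(real \<Rightarrow> real \<times> real) \<Rightarrow> real set \<Rightarrow> bool" where
  "arclength_param X I \<longleftrightarrow> (\<forall>s\<in>I. norm (vel X s) = 1)"

end

theory Submission
  imports Defs
begin


lemma det2_comb:
  "det2 (x *\<^sub>R e + y *\<^sub>R n) (x' *\<^sub>R e + y' *\<^sub>R n) = (x*y' - y*x') * det2 e n"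
  by (cases e; cases n) (simp add: det2_def algebra_simps)

lemma frame_facts:
  fixes e n :: "real \<times> real"
  assumes "norm e = 1" "norm n = 1" "inner e n = 0"
  shows "(det2 e n)^2 = 1" "\<And>z. z = inner z e *\<^sub>R e + inner z n *\<^sub>R n"
proof -
  obtain a b where e: "e = (a,b)" by (cases e)
  obtain c d where n: "n = (c,d)" by (cases n)
  have h1: "a^2+b^2 = 1" using assms(1) e by (simp add: norm_Pair)
  have h2: "c^2+d^2 = 1" using assms(2) n by (simp add: norm_Pair)
  have h3: "a*c+b*d = 0" using assms(3) e n by (simp add: inner_Pair)
  define D where "D = a*d - b*c"
  have D2: "D^2 = 1"
  proof -
    have "D^2 = (a^2+b^2)*(c^2+d^2) - (a*c+b*d)^2" unfolding D_def by algebra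
    then show ?thesis using h1 h2 h3 by simp
  qed
  have dd: "d = a*D"
  proof -
    have "a*D = a^2*d - b*(a*c)" unfolding D_def by algebra
    also have "a*c = -(b*d)" using h3 by linarith
    finally have "a*D = (a^2+b^2)*d" by algebra
    then show ?thesis using h1 by simp
  qed
  have cc: "c = -(b*D)"
  proof -
    have "b*D = (a*b)*d - b^2*c" unfolding D_def by algebra
    also have "b*d = -(a*c)" using h3 by linarith
    then have "(a*b)*d = -(a^2*c)" by algebra
    finally have "b*D = -((a^2+b^2)*c)" by algebra
    then show ?thesis using h1 by simp
  qed
  show "(det2 e n)^2 = 1" using D2 e n by (simp add: det2_def D_def)
  fix z :: "real \<times> real"
  obtain p q where z: "z = (p,q)" by (cases z)
  have cc2: "c*c = b*b"
  proof -
    have "c*c = (D*D)*(b*b)" using cc by algebra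
    then show ?thesis using D2 by (simp add: power2_eq_square)
  qed
  have dd2: "d*d = a*a"
  proof -
    have "d*d = (D*D)*(a*a)" using dd by algebra
    then show ?thesis using D2 by (simp add: power2_eq_square)
  qed
  have cd: "c*d = -(a*b)"
  proof -
    have "c*d = -((D*D)*(a*b))" using dd cc by algebra
    then show ?thesis using D2 by (simp add: power2_eq_square)
  qed
  have A1: "a*a + c*c = 1" using h1 cc2 by (simp add: power2_eq_square)
  have A2: "a*b + c*d = 0" using cd by simp
  have A3: "b*b + d*d = 1" using h1 dd2 by (simp add: power2_eq_square)
  have p1: "(p*a+q*b)*a + (p*c+q*d)*c = p" 
  proof -
    have "(p*a+q*b)*a + (p*c+q*d)*c = p*(a*a + c*c) + q*(a*b+c*d)" by algebra
    then show ?thesis using A1 A2 by simp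
  qed
  have p2: "(p*a+q*b)*b + (p*c+q*d)*d = q" 
  proof -
    have "(p*a+q*b)*b + (p*c+q*d)*d = p*(a*b + c*d) + q*(b*b+d*d)" by algebra
    then show ?thesis using A3 A2 by simp
  qed
  show "z = inner z e *\<^sub>R e + inner z n *\<^sub>R n"
    using z e n p1 p2 by (simp add: inner_Pair)
qed




lemma det2_orth_zero:
  fixes a u v :: "real \<times> real"
  assumes "det2 u v \<noteq> 0" "inner a u = 0" "inner a v = 0"
  shows "a = 0"
proof -
  obtain a1 a2 where a: "a = (a1,a2)" by (cases a)
  obtain u1 u2 where u: "u = (u1,u2)" by (cases u)
  obtain r1 r2 where v: "v = (r1,r2)" by (cases v)
  have D: "u1*r2 - u2*r1 \<noteq> 0" using assms(1) u v by (simp add: det2_def)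
  have e1: "a1*u1 + a2*u2 = 0" using assms(2) a u by (simp add: inner_Pair)
  have e2: "a1*r1 + a2*r2 = 0" using assms(3) a v by (simp add: inner_Pair)
  have "a1*(u1*r2 - u2*r1) = (a1*u1 + a2*u2)*r2 - (a1*r1 + a2*r2)*u2" by algebra
  then have "a1 = 0" using e1 e2 D by simp
  have "a2*(u1*r2 - u2*r1) = (a1*r1 + a2*r2)*u1 - (a1*u1 + a2*u2)*r1" by algebra
  then have "a2 = 0" using e1 e2 D by simp
  show ?thesis using a \<open>a1 = 0\<close> \<open>a2 = 0\<close> by (simp add: zero_prod_def)
qed

lemma det2_parallel: "det2 (c1 *\<^sub>R w) (c2 *\<^sub>R w) = 0"
  by (cases w) (simp add: det2_def)

lemma no_strict_inside:
  fixes C :: "(real\<times>real) set"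
  assumes cvx: "convex C" and q0: "Q0 \<in> closure C" and q1: "Q1 \<in> closure C" and q2: "Q2 \<in> closure C"
    and P: "P \<in> frontier C"
    and comb: "P = a0 *\<^sub>R Q0 + a1 *\<^sub>R Q1 + a2 *\<^sub>R Q2"
    and pos: "a0>0" "a1>0" "a2>0" "a0+a1+a2 = 1"
    and det: "det2 (Q1 - Q0) (Q2 - Q0) \<noteq> 0"
  shows False
proof (cases "P \<in> rel_interior C")
  case False
  have Pcl: "P \<in> closure C" using P by (simp add: frontier_def)
  obtain a where a0: "a \<noteq> 0" and sup: "\<And>y. y \<in> closure C \<Longrightarrow> a \<bullet> P \<le> a \<bullet> y"
    using supporting_hyperplane_relative_frontier[OF cvx Pcl False] by metis
  define u0 where "u0 = a \<bullet> Q0 - a \<bullet> P"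
  define u1 where "u1 = a \<bullet> Q1 - a \<bullet> P"
  define u2 where "u2 = a \<bullet> Q2 - a \<bullet> P"
  have g: "u0 \<ge> 0" "u1 \<ge> 0" "u2 \<ge> 0" using sup q0 q1 q2 by (auto simp: u0_def u1_def u2_def)
  have "a \<bullet> P = a0 * (a \<bullet> Q0) + a1 * (a \<bullet> Q1) + a2 * (a \<bullet> Q2)"
    using comb by (simp add: inner_add_right)
  then have "a0*u0 + a1*u1 + a2*u2 = 0"
  proof -
    have "a0*u0 + a1*u1 + a2*u2 = (a0 * (a \<bullet> Q0) + a1 * (a \<bullet> Q1) + a2 * (a \<bullet> Q2)) - (a0+a1+a2)*(a \<bullet> P)"
      unfolding u0_def u1_def u2_def by algebra
    then show ?thesis using pos(4) \<open>a \<bullet> P = _\<close> by simp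
  qed
  moreover have "a0*u0 \<ge> 0" "a1*u1 \<ge> 0" "a2*u2 \<ge> 0" using g pos by auto
  ultimately have "a0*u0 = 0" "a1*u1 = 0" "a2*u2 = 0" by linarith+
  then have "u0 = 0" "u1 = 0" "u2 = 0" using pos by auto
  then have "a \<bullet> (Q1 - Q0) = 0" "a \<bullet> (Q2 - Q0) = 0"
    unfolding u0_def u1_def u2_def by (simp_all add: inner_diff_right)
  then have "a = 0" using det2_orth_zero[OF det] by blast
  then show False using a0 by simp
next
  case True
  have "P \<notin> interior C" using P by (simp add: frontier_def)
  then have "rel_interior C \<noteq> interior C" using True by blast
  then have "affine hull C \<noteq> UNIV" using rel_interior_interior by blast
  then have "aff_dim C \<noteq> 2" using aff_dim_eq_full[of C] by simp
  moreover have "aff_dim C \<le> 2" using aff_dim_le_DIM[of C] by simp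
  ultimately have "aff_dim (closure C) \<le> 1" by simp
  then have "collinear (closure C)" by (simp add: collinear_aff_dim)
  then have "collinear {Q0,Q1,Q2}" by (rule collinear_subset) (use q0 q1 q2 in auto)
  then obtain w where w: "\<And>x y. x \<in> {Q0,Q1,Q2} \<Longrightarrow> y \<in> {Q0,Q1,Q2} \<Longrightarrow> \<exists>c. x - y = c *\<^sub>R w"
    unfolding collinear_def by blast
  obtain c1 where "Q1 - Q0 = c1 *\<^sub>R w" using w by blast
  moreover obtain c2 where "Q2 - Q0 = c2 *\<^sub>R w" using w by blast
  ultimately show False using det det2_parallel by metis
qed




lemma limit_rel:
  fixes f D1 D2 :: "real \<Rightarrow> real" and t r L :: real
  assumes r: "r > 0"
    and der: "\<And>s. \<bar>s - t\<bar> < r \<Longrightarrow> DERIV f s :> D1 s \<and> DERIV D1 s :> D2 s"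
    and nz: "D1 t \<noteq> 0" "D2 t \<noteq> 0"
    and rel: "\<And>k. k \<noteq> 0 \<Longrightarrow> \<bar>k\<bar> < r \<Longrightarrow>
       \<bar>f t + (((t+k) - t) * D1 (t+k) - (f (t+k) - f t)) / (D1 (t+k) - D1 t) * D1 t\<bar> *
       \<bar>((t+k) * D1 (t+k) - f (t+k)) / D1 (t+k) - (t * D1 t - f t) / D1 t\<bar>
       = L * \<bar>t * f (t+k) - (t+k) * f t\<bar>"
  shows "\<bar>f t\<bar> * \<bar>f t * D2 t / (D1 t)^2\<bar> = L * \<bar>t * D1 t - f t\<bar>"
proof -
  define p where "p = (\<lambda>s. (s * D1 s - f s) / D1 s)"
  have dft: "DERIV f t :> D1 t" and dD1: "DERIV D1 t :> D2 t" using der[of t] r by auto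
  have dp: "DERIV p t :> f t * D2 t / (D1 t)^2"
    unfolding p_def
    apply (rule DERIV_cong[OF DERIV_quotient[OF DERIV_diff[OF DERIV_mult[OF DERIV_ident dD1] dft] dD1 nz(1)]])
    using nz by (simp add: power2_eq_square field_simps)
  have lp: "((\<lambda>k. (p (t+k) - p t) / k) \<longlongrightarrow> f t * D2 t / (D1 t)^2) (at 0)"
    using dp by (simp add: DERIV_def)
  have lf: "((\<lambda>k. (f (t+k) - f t) / k) \<longlongrightarrow> D1 t) (at 0)"
    using dft by (simp add: DERIV_def)
  have lD: "((\<lambda>k. (D1 (t+k) - D1 t) / k) \<longlongrightarrow> D2 t) (at 0)"
    using dD1 by (simp add: DERIV_def)
  have cD: "((\<lambda>k. D1 (t+k)) \<longlongrightarrow> D1 t) (at 0)"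
    using DERIV_isCont[OF dD1] by (simp add: isCont_iff)
  have lmu: "((\<lambda>k. (D1 (t+k) - (f (t+k) - f t) / k) / ((D1 (t+k) - D1 t) / k)) \<longlongrightarrow> (D1 t - D1 t) / D2 t) (at 0)"
    using nz by (intro tendsto_intros cD lf lD) auto
  have l1: "((\<lambda>k. \<bar>f t + (D1 (t+k) - (f (t+k) - f t) / k) / ((D1 (t+k) - D1 t) / k) * D1 t\<bar> *
        \<bar>(p (t+k) - p t) / k\<bar>) \<longlongrightarrow> \<bar>f t + (D1 t - D1 t) / D2 t * D1 t\<bar> * \<bar>f t * D2 t / (D1 t)^2\<bar>) (at 0)"
    by (intro tendsto_intros lmu lp)
  have l2: "((\<lambda>k. L * \<bar>t * ((f (t+k) - f t) / k) - f t\<bar>) \<longlongrightarrow> L * \<bar>t * D1 t - f t\<bar>) (at 0)"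
    by (intro tendsto_intros lf)
  have ev: "eventually (\<lambda>k. k \<noteq> 0 \<and> \<bar>k\<bar> < r) (at 0)"
    unfolding eventually_at using r by (auto intro!: exI[of _ r] simp: dist_real_def)
  have "eventually (\<lambda>k. \<bar>f t + (D1 (t+k) - (f (t+k) - f t) / k) / ((D1 (t+k) - D1 t) / k) * D1 t\<bar> *
        \<bar>(p (t+k) - p t) / k\<bar> = L * \<bar>t * ((f (t+k) - f t) / k) - f t\<bar>) (at 0)"
    using ev
  proof (rule eventually_mono)
    fix k assume k: "k \<noteq> 0 \<and> \<bar>k\<bar> < r"
    have e1: "(D1 (t+k) - (f (t+k) - f t) / k) / ((D1 (t+k) - D1 t) / k)
        = (k * D1 (t+k) - (f (t+k) - f t)) / (D1 (t+k) - D1 t)"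
    proof -
      have a: "D1 (t+k) - (f (t+k) - f t) / k = (k * D1 (t+k) - (f (t+k) - f t)) / k"
        using k by (simp add: field_simps)
      show ?thesis unfolding a
        by (cases "D1 (t+k) - D1 t = 0") (use k in \<open>simp_all add: field_simps\<close>)
    qed
    have e2: "\<bar>(p (t+k) - p t) / k\<bar> = \<bar>p (t+k) - p t\<bar> / \<bar>k\<bar>" by (simp add: abs_divide)
    have e3: "\<bar>t * ((f (t+k) - f t) / k) - f t\<bar> = \<bar>t * f (t+k) - (t+k) * f t\<bar> / \<bar>k\<bar>"
    proof -
      have "t * ((f (t+k) - f t) / k) - f t = (t * f (t+k) - (t+k) * f t) / k"
        using k by (simp add: field_simps)
      then show ?thesis by (simp add: abs_divide)
    qed
    show "\<bar>f t + (D1 (t+k) - (f (t+k) - f t) / k) / ((D1 (t+k) - D1 t) / k) * D1 t\<bar> *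
        \<bar>(p (t+k) - p t) / k\<bar> = L * \<bar>t * ((f (t+k) - f t) / k) - f t\<bar>"
      unfolding e1 e2 e3 using rel[of k] k by (simp add: p_def)
  qed
  then have l1': "((\<lambda>k. L * \<bar>t * ((f (t+k) - f t) / k) - f t\<bar>) \<longlongrightarrow> \<bar>f t + (D1 t - D1 t) / D2 t * D1 t\<bar> * \<bar>f t * D2 t / (D1 t)^2\<bar>) (at 0)"
    by (rule Lim_transform_eventually[OF l1])
  from tendsto_unique[OF _ l1' l2] show ?thesis by simp
qed




lemma sign_facts:
  fixes f D1 D2 :: "real \<Rightarrow> real"
  assumes der: "\<And>s. \<bar>s\<bar> < \<eta> \<Longrightarrow> DERIV f s :> D1 s \<and> DERIV D1 s :> D2 s \<and> D2 s > 0"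
    and f0: "f 0 = 0" "D1 0 = 0" and t: "t \<noteq> 0" "\<bar>t\<bar> < \<eta>"
  shows "f t > 0 \<and> t * D1 t > 0 \<and> t * D1 t - f t > 0"
proof (cases "t > 0")
  case True
  have d: "\<And>x. 0 \<le> x \<Longrightarrow> x \<le> t \<Longrightarrow> DERIV f x :> D1 x" using der t True by auto
  obtain z where z: "0 < z" "z < t" "f t - f 0 = (t - 0) * D1 z" using MVT2[OF True d] by blast
  have inc: "\<And>a b. 0 \<le> a \<Longrightarrow> a < b \<Longrightarrow> b \<le> t \<Longrightarrow> D1 a < D1 b"
  proof -
    fix a b :: real assume ab: "0 \<le> a" "a < b" "b \<le> t"
    show "D1 a < D1 b"
      by (rule DERIV_pos_imp_increasing[OF ab(2)]) (use der ab t in \<open>force\<close>)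
  qed
  have "D1 0 < D1 z" "D1 z < D1 t" using inc z by auto
  then show ?thesis using z f0 True by (auto intro: mult_pos_pos simp: algebra_simps)
next
  case False
  then have tn: "t < 0" using t by auto
  have d: "\<And>x. t \<le> x \<Longrightarrow> x \<le> 0 \<Longrightarrow> DERIV f x :> D1 x" using der t tn by auto
  obtain z where z: "t < z" "z < 0" "f 0 - f t = (0 - t) * D1 z" using MVT2[OF tn d] by blast
  have inc: "\<And>a b. t \<le> a \<Longrightarrow> a < b \<Longrightarrow> b \<le> 0 \<Longrightarrow> D1 a < D1 b"
  proof -
    fix a b :: real assume ab: "t \<le> a" "a < b" "b \<le> 0"
    show "D1 a < D1 b"
      by (rule DERIV_pos_imp_increasing[OF ab(2)]) (use der ab t tn in \<open>force\<close>)
  qed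
  have "D1 t < D1 z" "D1 z < D1 0" using inc z by auto
  then have a: "D1 z < 0" "D1 t < 0" "D1 t - D1 z < 0" using f0 by auto
  have "f t = t * D1 z" using z f0 by simp
  then show ?thesis using a tn
    by (auto simp: mult_neg_neg algebra_simps)
qed

lemma lam_half:
  fixes f D1 D2 :: "real \<Rightarrow> real"
  assumes eta: "\<eta> > 0"
    and der: "\<And>s. \<bar>s\<bar> < \<eta> \<Longrightarrow> DERIV f s :> D1 s \<and> DERIV D1 s :> D2 s"
    and cD2: "isCont D2 0"
    and f0: "f 0 = 0" "D1 0 = 0" "D2 0 > 0"
    and rel: "\<And>t. t \<noteq> 0 \<Longrightarrow> \<bar>t\<bar> < \<eta> \<Longrightarrow> (f t)^2 * D2 t = L * (D1 t)^2 * (t * D1 t - f t)"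
  shows "L = 1/2"
proof -
  define c where "c = D2 0"
  have ev: "eventually (\<lambda>t. t \<noteq> 0 \<and> \<bar>t\<bar> < \<eta>) (at (0::real))"
    unfolding eventually_at using eta by (auto intro!: exI[of _ \<eta>] simp: dist_real_def)
  have d0: "DERIV f 0 :> D1 0" "DERIV D1 0 :> D2 0" using der[of 0] eta by auto
  have lB: "((\<lambda>t. D1 t / t) \<longlongrightarrow> c) (at 0)"
    using d0(2) f0 by (simp add: DERIV_def c_def)
  have lA: "((\<lambda>t. f t / t^2) \<longlongrightarrow> c/2) (at 0)"
  proof (rule lhopital[where f' = D1 and g' = "\<lambda>t. 2*t"])
    show "(f \<longlongrightarrow> 0) (at 0)" using DERIV_isCont[OF d0(1)] f0 by (simp add: isCont_def)
    show "((\<lambda>t. t^2) \<longlongrightarrow> 0) (at (0::real))" by (intro tendsto_eq_intros) auto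
    show "eventually (\<lambda>t. t^2 \<noteq> 0) (at (0::real))" using ev by (auto elim: eventually_mono)
    show "eventually (\<lambda>t. 2*t \<noteq> 0) (at (0::real))" using ev by (auto elim: eventually_mono)
    show "eventually (\<lambda>t. DERIV f t :> D1 t) (at 0)" using ev der by (auto elim: eventually_mono)
    show "eventually (\<lambda>t. DERIV (\<lambda>t. t^2) t :> 2*t) (at (0::real))"
      by (intro always_eventually allI) (auto intro!: derivative_eq_intros)
    have "((\<lambda>t. (D1 t / t) / 2) \<longlongrightarrow> c/2) (at 0)" by (intro tendsto_intros lB) auto
    then show "((\<lambda>t. D1 t / (2*t)) \<longlongrightarrow> c/2) (at 0)" by (simp add: mult.commute)
  qed
  have lC: "(D2 \<longlongrightarrow> c) (at 0)" using cD2 by (simp add: isCont_def c_def)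
  have l1: "((\<lambda>t. (f t / t^2)^2 * D2 t) \<longlongrightarrow> (c/2)^2 * c) (at 0)"
    by (intro tendsto_intros lA lC)
  have l2: "((\<lambda>t. L * (D1 t / t)^2 * (D1 t / t - f t / t^2)) \<longlongrightarrow> L * c^2 * (c - c/2)) (at 0)"
    by (intro tendsto_intros lA lB)
  have "eventually (\<lambda>t. (f t / t^2)^2 * D2 t = L * (D1 t / t)^2 * (D1 t / t - f t / t^2)) (at 0)"
    using ev
  proof (rule eventually_mono)
    fix t :: real assume t: "t \<noteq> 0 \<and> \<bar>t\<bar> < \<eta>"
    have "(f t / t^2)^2 * D2 t = (f t)^2 * D2 t / t^4" by (simp add: power_divide power_mult_distrib field_simps)
    also have "\<dots> = L * (D1 t)^2 * (t * D1 t - f t) / t^4" using rel t by simp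
    also have "\<dots> = L * (D1 t / t)^2 * (D1 t / t - f t / t^2)"
      using t by (simp add: field_simps power2_eq_square power4_eq_xxxx)
    finally show "(f t / t^2)^2 * D2 t = L * (D1 t / t)^2 * (D1 t / t - f t / t^2)" .
  qed
  then have l1': "((\<lambda>t. L * (D1 t / t)^2 * (D1 t / t - f t / t^2)) \<longlongrightarrow> (c/2)^2 * c) (at 0)"
    by (rule Lim_transform_eventually[OF l1])
  have eq: "(c/2)^2 * c = L * c^2 * (c - c/2)" using tendsto_unique[OF _ l1' l2] by simp
  have "c > 0" using f0 c_def by simp
  then have "c^3 * (1/4) = c^3 * (L/2)" using eq by (simp add: power2_eq_square power3_eq_cube field_simps)
  then show ?thesis using \<open>c > 0\<close> by simp
qed




lemma tm_frame:
  fixes e n X0 :: "real \<times> real"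
  assumes D: "det2 e n \<noteq> 0" and ca: "ca \<noteq> 0" and cb: "cb \<noteq> 0"
    and Pa: "Pa = X0 + ta *\<^sub>R e + ya *\<^sub>R n" and Pb: "Pb = X0 + tb *\<^sub>R e + yb *\<^sub>R n"
    and va: "va = ca *\<^sub>R (e + ma *\<^sub>R n)" and vb: "vb = cb *\<^sub>R (e + mb *\<^sub>R n)"
  shows "Pa + (det2 (Pb - Pa) vb / det2 va vb) *\<^sub>R va
     = X0 + (ta + ((tb - ta) * mb - (yb - ya)) / (mb - ma)) *\<^sub>R e
          + (ya + ((tb - ta) * mb - (yb - ya)) / (mb - ma) * ma) *\<^sub>R n"
proof -
  define \<mu> where "\<mu> = ((tb - ta) * mb - (yb - ya)) / (mb - ma)"
  have d1: "Pb - Pa = (tb - ta) *\<^sub>R e + (yb - ya) *\<^sub>R n" using Pa Pb by (simp add: algebra_simps)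
  have d2: "vb = cb *\<^sub>R e + (cb*mb) *\<^sub>R n" using vb by (simp add: algebra_simps)
  have d3: "va = ca *\<^sub>R e + (ca*ma) *\<^sub>R n" using va by (simp add: algebra_simps)
  have num: "det2 (Pb - Pa) vb = cb * ((tb - ta) * mb - (yb - ya)) * det2 e n"
    unfolding d1 d2 det2_comb by (simp add: algebra_simps)
  have den: "det2 va vb = ca * cb * (mb - ma) * det2 e n"
    unfolding d2 d3 det2_comb by (simp add: algebra_simps)
  have r: "(det2 (Pb - Pa) vb / det2 va vb) * ca = \<mu>"
    unfolding num den \<mu>_def using D ca cb
    by (cases "mb - ma = 0") (simp_all add: field_simps)
  have "(det2 (Pb - Pa) vb / det2 va vb) *\<^sub>R va = \<mu> *\<^sub>R (e + ma *\<^sub>R n)"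
    using r va by (simp add: scaleR_scaleR[symmetric] del: scaleR_scaleR) (simp add: r[symmetric])
  then show ?thesis unfolding \<mu>_def[symmetric] using Pa by (simp add: algebra_simps)
qed

lemma tri_frame:
  "tri_area (X0 + x1 *\<^sub>R e + y1 *\<^sub>R n) (X0 + x2 *\<^sub>R e + y2 *\<^sub>R n) (X0 + x3 *\<^sub>R e + y3 *\<^sub>R n)
     = \<bar>det2 e n\<bar> * \<bar>(x2-x1)*(y3-y1) - (y2-y1)*(x3-x1)\<bar> / 2"
proof -
  have a: "(X0 + x2 *\<^sub>R e + y2 *\<^sub>R n) - (X0 + x1 *\<^sub>R e + y1 *\<^sub>R n) = (x2-x1) *\<^sub>R e + (y2-y1) *\<^sub>R n"
    by (simp add: algebra_simps)
  have b: "(X0 + x3 *\<^sub>R e + y3 *\<^sub>R n) - (X0 + x1 *\<^sub>R e + y1 *\<^sub>R n) = (x3-x1) *\<^sub>R e + (y3-y1) *\<^sub>R n"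
    by (simp add: algebra_simps)
  show ?thesis unfolding tri_area_def a b det2_comb by (simp add: abs_mult)
qed

lemma UT_frame:
  fixes X :: "real \<Rightarrow> real \<times> real"
  assumes D: "det2 e n \<noteq> 0"
    and v0: "vel X s = c0 *\<^sub>R e" "c0 \<noteq> 0"
    and p1: "X (s+h1) = X s + t1 *\<^sub>R e + f1 *\<^sub>R n" and v1: "vel X (s+h1) = c1 *\<^sub>R (e + m1 *\<^sub>R n)" "c1 \<noteq> 0"
    and p2: "X (s+h2) = X s + t2 *\<^sub>R e + f2 *\<^sub>R n" and v2: "vel X (s+h2) = c2 *\<^sub>R (e + m2 *\<^sub>R n)" "c2 \<noteq> 0"
    and UT: "U_area X s h1 h2 = L * T_area X s h1 h2"
  shows "\<bar>f1 + ((t2 - t1) * m2 - (f2 - f1)) / (m2 - m1) * m1\<bar> *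
         \<bar>(t2 * m2 - f2) / m2 - (t1 * m1 - f1) / m1\<bar> = L * \<bar>t1 * f2 - t2 * f1\<bar>"
proof -
  define X0 where "X0 = X s"
  have p0: "X s = X0 + 0 *\<^sub>R e + 0 *\<^sub>R n" by (simp add: X0_def)
  have v0': "vel X s = c0 *\<^sub>R (e + 0 *\<^sub>R n)" using v0 by simp
  define \<mu>B where "\<mu>B = ((t2 - t1) * m2 - (f2 - f1)) / (m2 - m1)"
  define \<mu>1 where "\<mu>1 = ((t1 - 0) * m1 - (f1 - 0)) / (m1 - 0)"
  define \<mu>2 where "\<mu>2 = ((t2 - 0) * m2 - (f2 - 0)) / (m2 - 0)"
  have p1': "X (s+h1) = X0 + t1 *\<^sub>R e + f1 *\<^sub>R n" using p1 X0_def by simp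
  have p2': "X (s+h2) = X0 + t2 *\<^sub>R e + f2 *\<^sub>R n" using p2 X0_def by simp
  have B: "tangent_meet X (s+h1) (s+h2) = X0 + (t1 + \<mu>B) *\<^sub>R e + (f1 + \<mu>B * m1) *\<^sub>R n"
    unfolding tangent_meet_def \<mu>B_def by (rule tm_frame[OF D v1(2) v2(2) p1' p2' v1(1) v2(1)])
  have B1: "tangent_meet X s (s+h1) = X0 + (0 + \<mu>1) *\<^sub>R e + (0 + \<mu>1 * 0) *\<^sub>R n"
    unfolding tangent_meet_def \<mu>1_def by (rule tm_frame[OF D v0(2) v1(2) p0 p1' v0' v1(1)])
  have B2: "tangent_meet X s (s+h2) = X0 + (0 + \<mu>2) *\<^sub>R e + (0 + \<mu>2 * 0) *\<^sub>R n"
    unfolding tangent_meet_def \<mu>2_def by (rule tm_frame[OF D v0(2) v2(2) p0 p2' v0' v2(1)])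
  have U: "U_area X s h1 h2 = \<bar>det2 e n\<bar> * \<bar>(f1 + \<mu>B * m1) * (\<mu>2 - \<mu>1)\<bar> / 2"
    unfolding U_area_def B B1 B2 tri_frame by (simp add: algebra_simps)
  have T: "T_area X s h1 h2 = \<bar>det2 e n\<bar> * \<bar>t1 * f2 - t2 * f1\<bar> / 2"
    unfolding T_area_def p0 p1' p2' tri_frame by (simp add: algebra_simps)
  have "\<bar>(f1 + \<mu>B * m1) * (\<mu>2 - \<mu>1)\<bar> = L * \<bar>t1 * f2 - t2 * f1\<bar>"
    using UT D unfolding U T by (simp add: field_simps)
  then show ?thesis unfolding \<mu>B_def \<mu>1_def \<mu>2_def by (simp add: abs_mult)
qed


lemma ev_radius:
  assumes "eventually P (at (0::real))" "P 0"
  shows "\<exists>\<epsilon>>0. \<forall>h. \<bar>h\<bar> < \<epsilon> \<longrightarrow> P h"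
proof -
  obtain \<epsilon> where "\<epsilon> > 0" "\<And>x. x \<noteq> 0 \<Longrightarrow> dist x 0 < \<epsilon> \<Longrightarrow> P x"
    using assms(1) unfolding eventually_at by blast
  then show ?thesis using assms(2) by (metis dist_real_def diff_zero)
qed

lemma frame_contra:
  fixes C :: "(real \<times> real) set" and e n Z :: "real \<times> real"
  assumes cvx: "convex C" and D: "det2 e n \<noteq> 0"
    and q0: "Z + t *\<^sub>R e + ya *\<^sub>R n \<in> closure C"
    and q1: "Z + (-b) *\<^sub>R e + yl *\<^sub>R n \<in> closure C"
    and q2: "Z + b *\<^sub>R e + yr *\<^sub>R n \<in> closure C"
    and P: "Z + t *\<^sub>R e + yp *\<^sub>R n \<in> frontier C"
    and tb: "\<bar>t\<bar> < b" and y: "ya < yp" "2*b*yp < (b-t)*yl + (b+t)*yr"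
  shows False
proof -
  have b: "b > 0" using tb by linarith
  define ch where "ch = ((b-t)*yl + (b+t)*yr) / (2*b)"
  have ch: "yp < ch" using y b unfolding ch_def by (simp add: field_simps)
  define \<mu> where "\<mu> = (ch - yp) / (ch - ya)"
  have mu: "0 < \<mu>" "\<mu> < 1" using ch y unfolding \<mu>_def by (auto simp: field_simps)
  define a1 where "a1 = (1-\<mu>)*(b-t)/(2*b)"
  define a2 where "a2 = (1-\<mu>)*(b+t)/(2*b)"
  have pos: "a1 > 0" "a2 > 0" using mu tb b unfolding a1_def a2_def by (auto intro!: divide_pos_pos mult_pos_pos)
  have sum: "\<mu> + a1 + a2 = 1" using b unfolding a1_def a2_def by (simp add: field_simps)
  have cx: "\<mu> * t + a1 * (-b) + a2 * b = t" using b unfolding a1_def a2_def by (simp add: field_simps)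
  have cy: "\<mu> * ya + a1 * yl + a2 * yr = yp"
  proof -
    have "a1 * yl + a2 * yr = (1-\<mu>) * ch" using b unfolding a1_def a2_def ch_def by (simp add: field_simps)
    moreover have "\<mu> * ya + (1-\<mu>) * ch = yp"
    proof -
      have "\<mu> * (ch - ya) = ch - yp" using ch y unfolding \<mu>_def by simp
      moreover have "\<mu> * ya + (1-\<mu>)*ch = ch - \<mu>*(ch - ya)" by (simp add: algebra_simps)
      ultimately show ?thesis by simp
    qed
    ultimately show ?thesis by simp
  qed
  have comb: "Z + t *\<^sub>R e + yp *\<^sub>R n = \<mu> *\<^sub>R (Z + t *\<^sub>R e + ya *\<^sub>R n) + a1 *\<^sub>R (Z + (-b) *\<^sub>R e + yl *\<^sub>R n)
      + a2 *\<^sub>R (Z + b *\<^sub>R e + yr *\<^sub>R n)"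
  proof -
    have "\<mu> *\<^sub>R (Z + t *\<^sub>R e + ya *\<^sub>R n) + a1 *\<^sub>R (Z + (-b) *\<^sub>R e + yl *\<^sub>R n)
      + a2 *\<^sub>R (Z + b *\<^sub>R e + yr *\<^sub>R n) = (\<mu> + a1 + a2) *\<^sub>R Z + (\<mu> * t + a1 * (-b) + a2 * b) *\<^sub>R e
        + (\<mu> * ya + a1 * yl + a2 * yr) *\<^sub>R n"
      by (simp add: algebra_simps)
    then show ?thesis unfolding sum cx cy by simp
  qed
  have dd: "det2 ((Z + (-b) *\<^sub>R e + yl *\<^sub>R n) - (Z + t *\<^sub>R e + ya *\<^sub>R n)) ((Z + b *\<^sub>R e + yr *\<^sub>R n) - (Z + t *\<^sub>R e + ya *\<^sub>R n))
      = ((-b - t) * (yr - ya) - (yl - ya) * (b - t)) * det2 e n"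
  proof -
    have a: "(Z + (-b) *\<^sub>R e + yl *\<^sub>R n) - (Z + t *\<^sub>R e + ya *\<^sub>R n) = (-b - t) *\<^sub>R e + (yl - ya) *\<^sub>R n"
      by (simp add: algebra_simps)
    have c: "(Z + b *\<^sub>R e + yr *\<^sub>R n) - (Z + t *\<^sub>R e + ya *\<^sub>R n) = (b - t) *\<^sub>R e + (yr - ya) *\<^sub>R n"
      by (simp add: algebra_simps)
    show ?thesis unfolding a c det2_comb by simp
  qed
  have "(-b - t) * (yr - ya) - (yl - ya) * (b - t) = -(2*b) * (ch - ya)"
    using b unfolding ch_def by (simp add: field_simps)
  moreover have "ch - ya > 0" using ch y by linarith
  ultimately have "(-b - t) * (yr - ya) - (yl - ya) * (b - t) \<noteq> 0" using b by simp
  then have det: "det2 ((Z + (-b) *\<^sub>R e + yl *\<^sub>R n) - (Z + t *\<^sub>R e + ya *\<^sub>R n)) ((Z + b *\<^sub>R e + yr *\<^sub>R n) - (Z + t *\<^sub>R e + ya *\<^sub>R n)) \<noteq> 0"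
    unfolding dd using D by simp
  show False
    by (rule no_strict_inside[OF cvx q0 q1 q2 P comb mu(1) pos sum det])
qed

theorem lemma7:
  fixes X :: "real \<Rightarrow> real \<times> real" and I :: "real set"
    and lam :: "real \<Rightarrow> real"
  assumes curve: "strictly_convex_curve X I"
    and arc: "arclength_param X I"
    and UT: "\<forall>s\<in>I. \<exists>\<delta>>0. \<forall>h1 h2. \<bar>h1\<bar> < \<delta> \<and> \<bar>h2\<bar> < \<delta> \<and>
               s + h1 \<in> I \<and> s + h2 \<in> I \<and>
               X s \<noteq> X (s + h1) \<and> X s \<noteq> X (s + h2) \<and> X (s + h1) \<noteq> X (s + h2) \<longrightarrow>
               U_area X s h1 h2 = lam s * T_area X s h1 h2"
    and s0: "s0 \<in> I"
    and frame: "norm e = 1" "norm n = 1" "inner e n = 0"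
               "e = vel X s0 \<or> e = - vel X s0"
    and f_pos: "d > 0"
    and graph: "\<forall>t. \<bar>t\<bar> < d \<longrightarrow>
                  (\<exists>s\<in>I. inner (X s - X s0) e = t \<and> inner (X s - X s0) n = f t)"
    and f_nonneg: "\<forall>t. \<bar>t\<bar> < d \<longrightarrow> f t \<ge> 0"
    and f_C3: "C3_fun_on f {-d<..<d}"
    and f_conv: "strictly_convex_fun_on f {-d<..<d}"
    and f0: "f 0 = 0" "deriv f 0 = 0" "deriv (deriv f) 0 > 0"
  shows "\<exists>\<eta>>0. \<forall>t. \<bar>t\<bar> < \<eta> \<longrightarrow>
           2 * (f t)\<^sup>2 * deriv (deriv f) t = (deriv f t)\<^sup>2 * (t * deriv f t - f t)"
proof -
  have sc: "simple_convex_curve X I" and c3: "C3_curve_on X I"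
    using curve unfolding strictly_convex_curve_def by simp_all
  have I_open: "open I" using sc unfolding simple_convex_curve_def by simp
  have "\<exists>C. convex C \<and> X ` I \<subseteq> frontier C" using sc unfolding simple_convex_curve_def by simp
  then obtain C where cvx: "convex C" and XC: "X ` I \<subseteq> frontier C" by blast
  from c3 obtain D1x D2x D3x where Xd0: "\<forall>s\<in>I. (X has_vector_derivative D1x s) (at s) \<and>
      (D1x has_vector_derivative D2x s) (at s) \<and> (D2x has_vector_derivative D3x s) (at s)"
    unfolding C3_curve_on_def by blast
  have Xd: "\<And>s. s \<in> I \<Longrightarrow> (X has_vector_derivative D1x s) (at s) \<and>
      (D1x has_vector_derivative D2x s) (at s)" using Xd0 by blast
  have velx: "\<And>s. s \<in> I \<Longrightarrow> vel X s = D1x s" unfolding vel_def using Xd by (simp add: vector_derivative_at)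
  from f_C3 obtain Df1 Df2 Df3 where fd0: "\<forall>t\<in>{-d<..<d}. DERIV f t :> Df1 t \<and> DERIV Df1 t :> Df2 t \<and> DERIV Df2 t :> Df3 t"
    unfolding C3_fun_on_def by blast
  have fd: "\<And>t. t \<in> {-d<..<d} \<Longrightarrow> DERIV f t :> Df1 t \<and> DERIV Df1 t :> Df2 t \<and> DERIV Df2 t :> Df3 t"
    using fd0 by blast
  have fd': "\<And>t. \<bar>t\<bar> < d \<Longrightarrow> DERIV f t :> Df1 t \<and> DERIV Df1 t :> Df2 t \<and> DERIV Df2 t :> Df3 t"
    using fd by (simp add: abs_less_iff)
  have derivf: "\<And>t. \<bar>t\<bar> < d \<Longrightarrow> deriv f t = Df1 t" using fd' DERIV_imp_deriv by blast
  have derivf2: "\<And>t. \<bar>t\<bar> < d \<Longrightarrow> deriv (deriv f) t = Df2 t"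
  proof -
    fix t :: real assume t: "\<bar>t\<bar> < d"
    have "DERIV (deriv f) t :> Df2 t"
    proof (rule has_field_derivative_transform_within_open[where S="{-d<..<d}"])
      show "DERIV Df1 t :> Df2 t" using fd' t by blast
      show "open {-d<..<d}" by simp
      show "t \<in> {-d<..<d}" using t by (simp add: abs_less_iff)
      show "\<And>x. x \<in> {-d<..<d} \<Longrightarrow> Df1 x = deriv f x" using derivf by (simp add: abs_less_iff)
    qed
    then show "deriv (deriv f) t = Df2 t" by (rule DERIV_imp_deriv)
  qed
  have Df10: "Df1 0 = 0" using derivf[of 0] f0 f_pos by simp
  have Df20: "Df2 0 > 0" using derivf2[of 0] f0 f_pos by simp
  have Dsq: "(det2 e n)^2 = 1" and decomp: "\<And>z. z = inner z e *\<^sub>R e + inner z n *\<^sub>R n"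
    using frame_facts[OF frame(1-3)] by auto
  have Dnz: "det2 e n \<noteq> 0" using Dsq by auto
  define X0 where "X0 = X s0"
  have fr: "\<And>z. z = X0 + inner (z - X0) e *\<^sub>R e + inner (z - X0) n *\<^sub>R n"
    by (simp add: add.assoc flip: decomp)
  have ee: "inner e e = 1" using frame(1) by (simp add: dot_square_norm)
  have nn: "inner n n = 1" using frame(2) by (simp add: dot_square_norm)
  have c1: "\<And>x y. inner (X0 + x *\<^sub>R e + y *\<^sub>R n - X0) e = x"
    using ee frame(3) by (simp add: inner_add_left inner_commute[of n e])
  have c2: "\<And>x y. inner (X0 + x *\<^sub>R e + y *\<^sub>R n - X0) n = y"
    using nn frame(3) by (simp add: inner_add_left)
  have coord_inj: "\<And>x y x' y'. X0 + x *\<^sub>R e + y *\<^sub>R n = X0 + x' *\<^sub>R e + y' *\<^sub>R n \<Longrightarrow> x = x' \<and> y = y'"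
  proof -
    fix x y x' y' :: real assume a: "X0 + x *\<^sub>R e + y *\<^sub>R n = X0 + x' *\<^sub>R e + y' *\<^sub>R n"
    have "x = inner (X0 + x *\<^sub>R e + y *\<^sub>R n - X0) e" by (rule c1[symmetric])
    also have "\<dots> = inner (X0 + x' *\<^sub>R e + y' *\<^sub>R n - X0) e" by (simp only: a)
    also have "\<dots> = x'" by (rule c1)
    finally have 1: "x = x'" .
    have "y = inner (X0 + x *\<^sub>R e + y *\<^sub>R n - X0) n" by (rule c2[symmetric])
    also have "\<dots> = inner (X0 + x' *\<^sub>R e + y' *\<^sub>R n - X0) n" by (simp only: a)
    also have "\<dots> = y'" by (rule c2)
    finally show "x = x' \<and> y = y'" using 1 by simp
  qed
  define G where "G = (\<lambda>t. X0 + t *\<^sub>R e + f t *\<^sub>R n)"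
  have Gin: "\<And>t. \<bar>t\<bar> < d \<Longrightarrow> G t \<in> X ` I"
  proof -
    fix t :: real assume "\<bar>t\<bar> < d"
    then obtain s where s: "s \<in> I" and i1: "inner (X s - X0) e = t" and i2: "inner (X s - X0) n = f t"
      using graph X0_def by blast
    have "X s = G t" using fr[of "X s"] unfolding G_def i1 i2 .
    then show "G t \<in> X ` I" using s by (metis image_eqI)
  qed
  define \<sigma> where "\<sigma> = inner (D1x s0) e"
  have v0: "D1x s0 = \<sigma> *\<^sub>R e" "\<sigma> * \<sigma> = 1"
  proof -
    have nv: "norm (D1x s0) = 1" using arc s0 velx unfolding arclength_param_def by auto
    then have vv: "inner (D1x s0) (D1x s0) = 1" by (simp add: dot_square_norm)
    from frame(4) have "e = D1x s0 \<or> e = - D1x s0" using velx s0 by simp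
    then have "D1x s0 = \<sigma> *\<^sub>R e \<and> \<sigma> * \<sigma> = 1"
    proof
      assume "e = D1x s0"
      then show ?thesis using vv unfolding \<sigma>_def by simp
    next
      assume h: "e = - D1x s0"
      then have "\<sigma> = -1" using vv unfolding \<sigma>_def by simp
      then show ?thesis using h by simp
    qed
    then show "D1x s0 = \<sigma> *\<^sub>R e" "\<sigma> * \<sigma> = 1" by simp_all
  qed
  have snz: "\<sigma> \<noteq> 0" using v0 by auto
  obtain \<epsilon>0 where e0: "\<epsilon>0 > 0" "\<And>h. \<bar>h\<bar> < \<epsilon>0 \<Longrightarrow> s0 + h \<in> I"
  proof -
    obtain r where "r > 0" "ball s0 r \<subseteq> I" using I_open s0 open_contains_ball by blast
    moreover have "\<And>h. \<bar>h\<bar> < r \<Longrightarrow> s0 + h \<in> I"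
    proof -
      fix h :: real assume "\<bar>h\<bar> < r"
      then have "s0 + h \<in> ball s0 r" by (simp add: dist_real_def)
      then show "s0 + h \<in> I" using \<open>ball s0 r \<subseteq> I\<close> by blast
    qed
    ultimately show ?thesis using that by blast
  qed
  obtain \<delta>0 where d0: "\<delta>0 > 0" and UT0': "\<forall>h1 h2. \<bar>h1\<bar> < \<delta>0 \<and> \<bar>h2\<bar> < \<delta>0 \<and>
               s0 + h1 \<in> I \<and> s0 + h2 \<in> I \<and>
               X s0 \<noteq> X (s0 + h1) \<and> X s0 \<noteq> X (s0 + h2) \<and> X (s0 + h1) \<noteq> X (s0 + h2) \<longrightarrow>
               U_area X s0 h1 h2 = lam s0 * T_area X s0 h1 h2"
    using UT s0 by blast
  have UT0: "\<And>h1 h2. \<bar>h1\<bar> < \<delta>0 \<Longrightarrow> \<bar>h2\<bar> < \<delta>0 \<Longrightarrow>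
               s0 + h1 \<in> I \<Longrightarrow> s0 + h2 \<in> I \<Longrightarrow>
               X s0 \<noteq> X (s0 + h1) \<Longrightarrow> X s0 \<noteq> X (s0 + h2) \<Longrightarrow> X (s0 + h1) \<noteq> X (s0 + h2) \<Longrightarrow>
               U_area X s0 h1 h2 = lam s0 * T_area X s0 h1 h2"
    using UT0' by simp
  define xh where "xh = (\<lambda>h. inner (X (s0+h) - X0) e)"
  define yh where "yh = (\<lambda>h. inner (X (s0+h) - X0) n)"
  define xd where "xd = (\<lambda>h. inner (D1x (s0+h)) e)"
  have hv: "\<And>h. \<bar>h\<bar> < \<epsilon>0 \<Longrightarrow> ((\<lambda>h. X (s0+h)) has_vector_derivative D1x (s0+h)) (at h)"
  proof -
    fix h :: real assume h: "\<bar>h\<bar> < \<epsilon>0"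
    have a: "((\<lambda>h. s0 + h) has_vector_derivative 1) (at h)"
      by (auto intro!: derivative_eq_intros simp: has_real_derivative_iff_has_vector_derivative[symmetric])
    have b: "(X has_vector_derivative D1x (s0+h)) (at (s0+h))" using Xd e0 h by blast
    show "((\<lambda>h. X (s0+h)) has_vector_derivative D1x (s0+h)) (at h)"
      using vector_diff_chain_at[OF a b] by (simp add: o_def)
  qed
  have xhd: "\<And>h. \<bar>h\<bar> < \<epsilon>0 \<Longrightarrow> DERIV xh h :> xd h"
  proof -
    fix h :: real assume h: "\<bar>h\<bar> < \<epsilon>0"
    have "((\<lambda>h. X (s0+h)) has_derivative (\<lambda>k. k *\<^sub>R D1x (s0+h))) (at h)"
      using hv[OF h] by (simp add: has_vector_derivative_def)
    then have "((\<lambda>h. inner (X (s0+h) - X0) e) has_derivative (\<lambda>k. inner (k *\<^sub>R D1x (s0+h) - 0) e)) (at h)"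
      by (intro has_derivative_inner_left has_derivative_diff has_derivative_const)
    then have "(xh has_derivative (\<lambda>k. xd h * k)) (at h)"
      unfolding xh_def xd_def by (simp add: mult.commute)
    then show "DERIV xh h :> xd h" by (simp add: has_field_derivative_def)
  qed
  have xh0: "xh 0 = 0" "yh 0 = 0" unfolding xh_def yh_def X0_def by simp_all
  have xd0: "xd 0 = \<sigma>" unfolding xd_def \<sigma>_def by simp
  have cX: "isCont (\<lambda>h. X (s0+h)) 0"
    using hv[of 0] e0 has_vector_derivative_continuous by fastforce
  have cxh: "isCont xh 0" "isCont yh 0" unfolding xh_def yh_def using cX by (auto intro!: continuous_intros)
  have cxd: "isCont xd 0"
  proof -
    have "(D1x has_vector_derivative D2x s0) (at s0)" using Xd s0 by blast
    then have "isCont D1x s0" using has_vector_derivative_continuous by blast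
    then have "isCont (\<lambda>h. D1x (s0+h)) 0"
    proof -
      have "(\<lambda>h. D1x (s0+h)) \<midarrow>0\<rightarrow> D1x s0" using \<open>isCont D1x s0\<close> by (simp add: isCont_iff)
      then show ?thesis by (simp add: isCont_def)
    qed
    then show ?thesis unfolding xd_def by (auto intro!: continuous_intros)
  qed
  have sig: "\<sigma> = 1 \<or> \<sigma> = -1" using v0(2) square_eq_1_iff by blast
  have H: "\<And>x y u. x \<in> {-d<..<d} \<Longrightarrow> y \<in> {-d<..<d} \<Longrightarrow> x \<noteq> y \<Longrightarrow> 0<u \<Longrightarrow> u<1 \<Longrightarrow>
      f (u*x+(1-u)*y) < u*f x + (1-u)*f y" using f_conv unfolding strictly_convex_fun_on_def by blast
  define b where "b = d/2"
  have b: "b > 0" "b < d" using f_pos unfolding b_def by auto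
  have fposb: "\<And>y. \<bar>y\<bar> < d \<Longrightarrow> y \<noteq> 0 \<Longrightarrow> f y > 0"
  proof -
    fix y :: real assume y: "\<bar>y\<bar> < d" "y \<noteq> 0"
    have "f ((1/2) * 0 + (1 - 1/2) * y) < (1/2) * f 0 + (1 - 1/2) * f y"
      using H[of 0 y "1/2"] y f_pos by (auto simp: abs_less_iff)
    moreover have "f (y/2) \<ge> 0" using f_nonneg y by auto
    ultimately show "f y > 0" using f0 by simp
  qed
  define m where "m = min (f (-b)) (f b)"
  have m: "m > 0" "m \<le> f (-b)" "m \<le> f b" using fposb[of b] fposb[of "-b"] b unfolding m_def by auto
  have clos: "\<And>z. z \<in> X ` I \<Longrightarrow> z \<in> closure C" using XC frontier_def by blast
  have fro: "\<And>z. z \<in> X ` I \<Longrightarrow> z \<in> frontier C" using XC by blast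
  obtain \<epsilon>1 where e1: "\<epsilon>1 > 0" "\<And>h. \<bar>h\<bar> < \<epsilon>1 \<Longrightarrow> \<bar>xh h\<bar> < b \<and> yh h < m \<and> \<bar>h\<bar> < \<epsilon>0"
  proof -
    have "(xh \<longlongrightarrow> 0) (at 0)" using cxh(1) xh0 by (simp add: isCont_def)
    then have "((\<lambda>h. \<bar>xh h\<bar>) \<longlongrightarrow> \<bar>0\<bar>) (at 0)" by (rule tendsto_rabs)
    then have tx: "((\<lambda>h. \<bar>xh h\<bar>) \<longlongrightarrow> 0) (at 0)" by simp
    have ty: "(yh \<longlongrightarrow> 0) (at 0)" using cxh(2) xh0 by (simp add: isCont_def)
    have "eventually (\<lambda>h. \<bar>xh h\<bar> < b) (at 0)" using order_tendstoD(2)[OF tx b(1)] .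
    moreover have "eventually (\<lambda>h. yh h < m) (at 0)" using order_tendstoD(2)[OF ty m(1)] .
    moreover have "eventually (\<lambda>h. \<bar>h\<bar> < \<epsilon>0) (at (0::real))"
      unfolding eventually_at using e0 by (auto intro!: exI[of _ \<epsilon>0] simp: dist_real_def)
    ultimately have "eventually (\<lambda>h. \<bar>xh h\<bar> < b \<and> yh h < m \<and> \<bar>h\<bar> < \<epsilon>0) (at 0)"
      by eventually_elim auto
    from ev_radius[OF this] show ?thesis using xh0 b m e0 that by auto
  qed
  obtain \<epsilon>2 where e2: "\<epsilon>2 > 0" "\<And>h. \<bar>h\<bar> < \<epsilon>2 \<Longrightarrow> \<sigma> * xd h > 1/2 \<and> \<bar>h\<bar> < \<epsilon>0"
  proof -
    have tx: "((\<lambda>h. \<sigma> * xd h) \<longlongrightarrow> 1) (at 0)"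
    proof -
      have "(xd \<longlongrightarrow> \<sigma>) (at 0)" using cxd xd0 by (simp add: isCont_def)
      then have "((\<lambda>h. \<sigma> * xd h) \<longlongrightarrow> \<sigma> * \<sigma>) (at 0)" by (rule tendsto_mult_left)
      then show ?thesis using v0(2) by simp
    qed
    have "eventually (\<lambda>h. \<sigma> * xd h > 1/2) (at 0)" by (rule order_tendstoD(1)[OF tx]) simp
    moreover have "eventually (\<lambda>h. \<bar>h\<bar> < \<epsilon>0) (at (0::real))"
      unfolding eventually_at using e0 by (auto intro!: exI[of _ \<epsilon>0] simp: dist_real_def)
    ultimately have "eventually (\<lambda>h. \<sigma> * xd h > 1/2 \<and> \<bar>h\<bar> < \<epsilon>0) (at 0)"
      by eventually_elim auto
    from ev_radius[OF this] show ?thesis using xd0 v0(2) e0 that by auto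
  qed
  have Xfr: "\<And>h. X (s0+h) = X0 + xh h *\<^sub>R e + yh h *\<^sub>R n" unfolding xh_def yh_def by (rule fr)
  have match: "\<And>h. \<bar>h\<bar> < \<epsilon>1 \<Longrightarrow> yh h = f (xh h)"
  proof (rule ccontr)
    fix h :: real assume h: "\<bar>h\<bar> < \<epsilon>1" and ne: "yh h \<noteq> f (xh h)"
    define t where "t = xh h"
    have t: "\<bar>t\<bar> < b" and yhm: "yh h < m" and he0: "\<bar>h\<bar> < \<epsilon>0" using e1 h unfolding t_def by auto
    have Xin: "X (s0+h) \<in> X ` I" using e0 he0 by blast
    have Xe: "X (s0+h) = X0 + t *\<^sub>R e + yh h *\<^sub>R n" using Xfr t_def by simp
    have Gt: "X0 + t *\<^sub>R e + f t *\<^sub>R n \<in> X ` I" using Gin[of t] t b unfolding G_def by simp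
    have Gm: "X0 + (-b) *\<^sub>R e + f (-b) *\<^sub>R n \<in> X ` I" using Gin[of "-b"] b unfolding G_def by simp
    have Gp: "X0 + b *\<^sub>R e + f b *\<^sub>R n \<in> X ` I" using Gin[of "b"] b unfolding G_def by simp
    show False
    proof (cases "yh h < f t")
      case True
      define u where "u = (b - t) / (2*b)"
      have u: "0 < u" "u < 1" using t b unfolding u_def by (auto simp: field_simps abs_less_iff)
      have ut: "u * (-b) + (1 - u) * b = t" using b unfolding u_def by (simp add: field_simps)
      have "f (u * (-b) + (1 - u) * b) < u * f (-b) + (1 - u) * f b"
        using H[of "-b" b u] u b by auto
      then have "f t < u * f (-b) + (1 - u) * f b" unfolding ut .
      then have "2*b*f t < 2*b*(u * f (-b) + (1 - u) * f b)" using b by simp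
      also have "\<dots> = (b-t) * f (-b) + (b+t) * f b" using b unfolding u_def by (simp add: field_simps)
      finally have "2*b*f t < (b-t) * f (-b) + (b+t) * f b" .
      then show False
        using frame_contra[OF cvx Dnz, where Z=X0 and t=t and ya="yh h" and b=b and yl="f (-b)" and yr="f b" and yp="f t"] True clos[OF Xin] clos[OF Gm] clos[OF Gp]
          fro[OF Gt] t Xe by simp
    next
      case False
      then have lt: "f t < yh h" using ne t_def by simp
      have "(b-t) * m + (b+t) * m \<le> (b-t) * f (-b) + (b+t) * f b"
        using m t by (intro add_mono mult_left_mono) auto
      moreover have "2*b*yh h < (b-t) * m + (b+t) * m" using yhm b by (simp add: algebra_simps)
      ultimately have "2*b*yh h < (b-t) * f (-b) + (b+t) * f b" by linarith
      then show False
        using frame_contra[OF cvx Dnz, where Z=X0 and t=t and ya="f t" and b=b and yl="f (-b)" and yr="f b" and yp="yh h"] lt clos[OF Gt] clos[OF Gm] clos[OF Gp]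
          fro[OF Xin] t Xe by simp
    qed
  qed
  define \<epsilon>' where "\<epsilon>' = min \<epsilon>1 (min \<epsilon>2 \<delta>0)"
  have ep: "\<epsilon>' > 0" "\<epsilon>' \<le> \<epsilon>1" "\<epsilon>' \<le> \<epsilon>2" "\<epsilon>' \<le> \<delta>0" using e1 e2 d0 unfolding \<epsilon>'_def by auto
  define \<rho> where "\<rho> = \<epsilon>'/2"
  have rho: "\<rho> > 0" "\<rho> < \<epsilon>'" using ep unfolding \<rho>_def by auto
  have sxd: "\<And>h. \<bar>h\<bar> < \<epsilon>2 \<Longrightarrow> DERIV (\<lambda>h. \<sigma> * xh h) h :> \<sigma> * xd h \<and> \<sigma> * xd h > 1/2"
    using e2 xhd by (auto intro: DERIV_cmult)
  have incr: "\<And>a c. -\<rho> \<le> a \<Longrightarrow> a < c \<Longrightarrow> c \<le> \<rho> \<Longrightarrow> \<sigma> * xh a < \<sigma> * xh c"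
  proof -
    fix a c :: real assume ac: "-\<rho> \<le> a" "a < c" "c \<le> \<rho>"
    show "\<sigma> * xh a < \<sigma> * xh c"
    proof (rule DERIV_pos_imp_increasing[OF ac(2)])
      fix x assume "a \<le> x" "x \<le> c"
      then have "\<bar>x\<bar> < \<epsilon>2" using ac rho ep by auto
      then show "\<exists>y. DERIV (\<lambda>h. \<sigma> * xh h) x :> y \<and> y > 0" using sxd by fastforce
    qed
  qed
  define \<eta>1 where "\<eta>1 = min (\<sigma> * xh \<rho>) (- (\<sigma> * xh (-\<rho>)))"
  have eta1: "\<eta>1 > 0" using incr[of 0 \<rho>] incr[of "-\<rho>" 0] rho xh0 unfolding \<eta>1_def by auto
  have inv: "\<And>t. \<bar>t\<bar> < \<eta>1 \<Longrightarrow> \<exists>h. \<bar>h\<bar> \<le> \<rho> \<and> xh h = t"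
  proof -
    fix t :: real assume t: "\<bar>t\<bar> < \<eta>1"
    have st: "\<bar>\<sigma> * t\<bar> = \<bar>t\<bar>" using sig by auto
    have "\<exists>h\<ge>-\<rho>. h \<le> \<rho> \<and> \<sigma> * xh h = \<sigma> * t"
    proof (rule IVT)
      show "\<sigma> * xh (-\<rho>) \<le> \<sigma> * t" using t st unfolding \<eta>1_def by (auto simp: abs_less_iff)
      show "\<sigma> * t \<le> \<sigma> * xh \<rho>" using t st unfolding \<eta>1_def by (auto simp: abs_less_iff)
      show "-\<rho> \<le> \<rho>" using rho by simp
      show "\<forall>x. -\<rho> \<le> x \<and> x \<le> \<rho> \<longrightarrow> isCont (\<lambda>h. \<sigma> * xh h) x"
      proof (intro allI impI)
        fix x assume "-\<rho> \<le> x \<and> x \<le> \<rho>"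
        then have "\<bar>x\<bar> < \<epsilon>2" using rho ep by auto
        then show "isCont (\<lambda>h. \<sigma> * xh h) x" using sxd DERIV_isCont by blast
      qed
    qed
    then obtain h where h1: "-\<rho> \<le> h" "h \<le> \<rho>" and h2: "\<sigma> * xh h = \<sigma> * t" by blast
    have "\<bar>h\<bar> \<le> \<rho>" using h1 by (simp add: abs_le_iff)
    moreover have "xh h = t" using h2 snz by simp
    ultimately show "\<exists>h. \<bar>h\<bar> \<le> \<rho> \<and> xh h = t" by blast
  qed
  have Gd: "\<And>t. \<bar>t\<bar> < d \<Longrightarrow> (G has_vector_derivative (e + Df1 t *\<^sub>R n)) (at t)"
  proof -
    fix t :: real assume t: "\<bar>t\<bar> < d"
    have fder: "DERIV f t :> Df1 t" using fd' t by blast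
    have "(G has_vector_derivative (0 + (t *\<^sub>R 0 + 1 *\<^sub>R e) + (f t *\<^sub>R 0 + Df1 t *\<^sub>R n))) (at t)"
      unfolding G_def
      by (intro has_vector_derivative_add has_vector_derivative_scaleR DERIV_ident fder has_vector_derivative_const)
    then show "(G has_vector_derivative (e + Df1 t *\<^sub>R n)) (at t)" by simp
  qed
  have veld: "\<And>h. \<bar>h\<bar> < \<epsilon>' \<Longrightarrow> D1x (s0+h) = xd h *\<^sub>R (e + Df1 (xh h) *\<^sub>R n)"
  proof -
    fix h :: real assume h: "\<bar>h\<bar> < \<epsilon>'"
    have h1: "\<bar>h\<bar> < \<epsilon>1" and h0: "\<bar>h\<bar> < \<epsilon>0" using h ep e1 by auto
    have xv: "(xh has_vector_derivative xd h) (at h)"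
      using xhd[OF h0] by (simp add: has_real_derivative_iff_has_vector_derivative)
    have "\<bar>xh h\<bar> < d" using e1 h1 b by fastforce
    then have A: "((G \<circ> xh) has_vector_derivative (xd h *\<^sub>R (e + Df1 (xh h) *\<^sub>R n))) (at h)"
      using vector_diff_chain_at[OF xv Gd] by blast
    have B: "\<And>y. y \<in> {-\<epsilon>1<..<\<epsilon>1} \<Longrightarrow> (G \<circ> xh) y = X (s0+y)"
    proof -
      fix y :: real assume "y \<in> {-\<epsilon>1<..<\<epsilon>1}"
      then have "\<bar>y\<bar> < \<epsilon>1" by (simp add: abs_less_iff)
      then show "(G \<circ> xh) y = X (s0+y)" using match Xfr[of y] unfolding G_def by simp
    qed
    have "((\<lambda>y. X (s0+y)) has_vector_derivative (xd h *\<^sub>R (e + Df1 (xh h) *\<^sub>R n))) (at h)"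
      by (rule has_vector_derivative_transform_within_open[OF A open_greaterThanLessThan _ B]) (use h1 in \<open>auto simp: abs_less_iff\<close>)
    then show "D1x (s0+h) = xd h *\<^sub>R (e + Df1 (xh h) *\<^sub>R n)"
      using hv[OF h0] vector_derivative_unique_at by blast
  qed
  have good: "\<And>t. \<bar>t\<bar> < \<eta>1 \<Longrightarrow> \<exists>h c. \<bar>h\<bar> < \<delta>0 \<and> s0 + h \<in> I \<and> xh h = t \<and>
       X (s0+h) = X s0 + t *\<^sub>R e + f t *\<^sub>R n \<and> vel X (s0+h) = c *\<^sub>R (e + Df1 t *\<^sub>R n) \<and> c \<noteq> 0"
  proof -
    fix t :: real assume t: "\<bar>t\<bar> < \<eta>1"
    obtain h where h: "\<bar>h\<bar> \<le> \<rho>" "xh h = t" using inv[OF t] by blast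
    have h': "\<bar>h\<bar> < \<epsilon>'" using h rho by linarith
    have hI: "s0 + h \<in> I" using e0 e1 h' ep by fastforce
    have "X (s0+h) = X s0 + t *\<^sub>R e + f t *\<^sub>R n"
      using Xfr[of h] match[of h] h h' ep X0_def by simp
    moreover have "vel X (s0+h) = xd h *\<^sub>R (e + Df1 t *\<^sub>R n)" using veld[OF h'] velx[OF hI] h by simp
    moreover have "xd h \<noteq> 0"
    proof -
      have "\<bar>h\<bar> < \<epsilon>2" using h' ep by linarith
      then have "\<sigma> * xd h > 1/2" using e2 by blast
      then show ?thesis by auto
    qed
    moreover have "\<bar>h\<bar> < \<delta>0" using h' ep by linarith
    ultimately show "?thesis t" using hI h by blast
  qed
  have v0s: "vel X s0 = \<sigma> *\<^sub>R e" using velx[OF s0] v0(1) by simp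
  have rel2: "\<And>t1 t2. \<bar>t1\<bar> < \<eta>1 \<Longrightarrow> \<bar>t2\<bar> < \<eta>1 \<Longrightarrow> t1 \<noteq> 0 \<Longrightarrow> t2 \<noteq> 0 \<Longrightarrow> t1 \<noteq> t2 \<Longrightarrow>
      \<bar>f t1 + ((t2 - t1) * Df1 t2 - (f t2 - f t1)) / (Df1 t2 - Df1 t1) * Df1 t1\<bar> *
      \<bar>(t2 * Df1 t2 - f t2) / Df1 t2 - (t1 * Df1 t1 - f t1) / Df1 t1\<bar> = lam s0 * \<bar>t1 * f t2 - t2 * f t1\<bar>"
  proof -
    fix t1 t2 :: real assume t: "\<bar>t1\<bar> < \<eta>1" "\<bar>t2\<bar> < \<eta>1" "t1 \<noteq> 0" "t2 \<noteq> 0" "t1 \<noteq> t2"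
    obtain h1 c1 where g1: "\<bar>h1\<bar> < \<delta>0" "s0 + h1 \<in> I" "xh h1 = t1"
       "X (s0+h1) = X s0 + t1 *\<^sub>R e + f t1 *\<^sub>R n" "vel X (s0+h1) = c1 *\<^sub>R (e + Df1 t1 *\<^sub>R n)" "c1 \<noteq> 0"
      using good[OF t(1)] by blast
    obtain h2 c2 where g2: "\<bar>h2\<bar> < \<delta>0" "s0 + h2 \<in> I" "xh h2 = t2"
       "X (s0+h2) = X s0 + t2 *\<^sub>R e + f t2 *\<^sub>R n" "vel X (s0+h2) = c2 *\<^sub>R (e + Df1 t2 *\<^sub>R n)" "c2 \<noteq> 0"
      using good[OF t(2)] by blast
    have n1: "X s0 \<noteq> X (s0 + h1)"
    proof
      assume "X s0 = X (s0 + h1)"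
      then have "xh h1 = 0" unfolding xh_def X0_def by simp
      then show False using g1(3) t(3) by simp
    qed
    have n2: "X s0 \<noteq> X (s0 + h2)"
    proof
      assume "X s0 = X (s0 + h2)"
      then have "xh h2 = 0" unfolding xh_def X0_def by simp
      then show False using g2(3) t(4) by simp
    qed
    have n3: "X (s0 + h1) \<noteq> X (s0 + h2)"
    proof
      assume "X (s0 + h1) = X (s0 + h2)"
      then have "xh h1 = xh h2" unfolding xh_def by simp
      then show False using g1(3) g2(3) t(5) by simp
    qed
    have U: "U_area X s0 h1 h2 = lam s0 * T_area X s0 h1 h2"
      by (rule UT0[OF g1(1) g2(1) g1(2) g2(2) n1 n2 n3])
    show "?thesis t1 t2"
      by (rule UT_frame[OF Dnz v0s snz g1(4) g1(5) g1(6) g2(4) g2(5) g2(6) U])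
  qed
  obtain \<eta>3 where e3: "\<eta>3 > 0" "\<And>t. \<bar>t\<bar> < \<eta>3 \<Longrightarrow> Df2 t > 0 \<and> \<bar>t\<bar> < d"
  proof -
    have "DERIV Df2 0 :> Df3 0" using fd'[of 0] f_pos by simp
    then have "isCont Df2 0" by (rule DERIV_isCont)
    then have tx: "(Df2 \<longlongrightarrow> Df2 0) (at 0)" by (simp add: isCont_def)
    have "eventually (\<lambda>t. Df2 t > 0) (at 0)" by (rule order_tendstoD(1)[OF tx Df20])
    moreover have "eventually (\<lambda>h. \<bar>h\<bar> < d) (at (0::real))"
      unfolding eventually_at using f_pos by (auto intro!: exI[of _ d] simp: dist_real_def)
    ultimately have "eventually (\<lambda>t. Df2 t > 0 \<and> \<bar>t\<bar> < d) (at 0)" by eventually_elim auto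
    from ev_radius[OF this] show ?thesis using Df20 f_pos that by auto
  qed
  have cD2: "isCont Df2 0"
  proof -
    have "DERIV Df2 0 :> Df3 0" using fd'[of 0] f_pos by simp
    then show ?thesis by (rule DERIV_isCont)
  qed
  define \<eta> where "\<eta> = min \<eta>1 \<eta>3"
  have eta: "\<eta> > 0" "\<eta> \<le> \<eta>1" "\<eta> \<le> \<eta>3" using eta1 e3 unfolding \<eta>_def by auto
  have derl: "\<And>s. \<bar>s\<bar> < \<eta> \<Longrightarrow> DERIV f s :> Df1 s \<and> DERIV Df1 s :> Df2 s \<and> Df2 s > 0 \<and> \<bar>s\<bar> < d"
    using fd' e3 eta by fastforce
  have ode: "\<And>t. t \<noteq> 0 \<Longrightarrow> \<bar>t\<bar> < \<eta> \<Longrightarrow> (f t)^2 * Df2 t = lam s0 * (Df1 t)^2 * (t * Df1 t - f t)"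
  proof -
    fix t :: real assume t: "t \<noteq> 0" "\<bar>t\<bar> < \<eta>"
    have sg: "f t > 0 \<and> t * Df1 t > 0 \<and> t * Df1 t - f t > 0"
      by (rule sign_facts[where \<eta>=\<eta>]) (use derl f0 Df10 t in auto)
    have D1nz: "Df1 t \<noteq> 0" using sg by auto
    have D2p: "Df2 t > 0" using derl t by blast
    define r where "r = min (\<eta> - \<bar>t\<bar>) \<bar>t\<bar>"
    have r: "r > 0" using t unfolding r_def by auto
    have lr: "\<bar>f t\<bar> * \<bar>f t * Df2 t / (Df1 t)^2\<bar> = lam s0 * \<bar>t * Df1 t - f t\<bar>"
    proof (rule limit_rel[OF r])
      show "\<And>s. \<bar>s - t\<bar> < r \<Longrightarrow> DERIV f s :> Df1 s \<and> DERIV Df1 s :> Df2 s"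
      proof -
        fix s assume "\<bar>s - t\<bar> < r"
        then have "\<bar>s\<bar> < \<eta>" unfolding r_def by linarith
        then show "DERIV f s :> Df1 s \<and> DERIV Df1 s :> Df2 s" using derl by blast
      qed
      show "Df1 t \<noteq> 0" "Df2 t \<noteq> 0" using D1nz D2p by auto
      show "\<And>k. k \<noteq> 0 \<Longrightarrow> \<bar>k\<bar> < r \<Longrightarrow>
         \<bar>f t + ((t + k - t) * Df1 (t + k) - (f (t + k) - f t)) / (Df1 (t + k) - Df1 t) * Df1 t\<bar> *
         \<bar>((t + k) * Df1 (t + k) - f (t + k)) / Df1 (t + k) - (t * Df1 t - f t) / Df1 t\<bar> =
         lam s0 * \<bar>t * f (t + k) - (t + k) * f t\<bar>"
      proof -
        fix k :: real assume k: "k \<noteq> 0" "\<bar>k\<bar> < r"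
        have a: "\<bar>t\<bar> < \<eta>1" "\<bar>t+k\<bar> < \<eta>1" "t + k \<noteq> 0" "t \<noteq> t + k"
          using k t eta unfolding r_def by (auto simp: abs_less_iff)
        show "?thesis k" by (rule rel2[OF a(1) a(2) t(1) a(3) a(4)])
      qed
    qed
    have "f t * (f t * Df2 t / (Df1 t)^2) = lam s0 * (t * Df1 t - f t)"
      using lr sg D2p by (simp add: abs_mult)
    then have "f t * (f t * Df2 t / (Df1 t)^2) * (Df1 t)^2 = lam s0 * (t * Df1 t - f t) * (Df1 t)^2" by simp
    then show "(f t)^2 * Df2 t = lam s0 * (Df1 t)^2 * (t * Df1 t - f t)"
      using D1nz by (simp add: power2_eq_square field_simps)
  qed
  have L: "lam s0 = 1/2"
  proof (rule lam_half[OF eta(1) _ cD2 f0(1) Df10 Df20 ode])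
    show "\<And>s. \<bar>s\<bar> < \<eta> \<Longrightarrow> DERIV f s :> Df1 s \<and> DERIV Df1 s :> Df2 s" using derl by blast
  qed
  show ?thesis
  proof (intro exI[of _ \<eta>] conjI allI impI)
    show "\<eta> > 0" by (rule eta(1))
    fix t :: real assume t: "\<bar>t\<bar> < \<eta>"
    have td: "\<bar>t\<bar> < d" using derl t by blast
    show "2 * (f t)\<^sup>2 * deriv (deriv f) t = (deriv f t)\<^sup>2 * (t * deriv f t - f t)"
    proof (cases "t = 0")
      case True
      then show ?thesis using f0 Df10 derivf[OF td] by simp
    next
      case False
      have "(f t)^2 * Df2 t = (1/2) * (Df1 t)^2 * (t * Df1 t - f t)" using ode[OF False t] L by simp
      then show ?thesis unfolding derivf[OF td] derivf2[OF td] by simp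
    qed
  qed
qed


end
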